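(* The product of finitely many Krasinkiewicz spaces is a Krasinkiewicz space.
   Context: For a compact metrizable $X$, a map $g\colon X\to M$ is Krasinkiewicz if every subcontinuum of $X$ is either contained in a fiber of $g$ or contains a component of some fiber of $g$; a metrizable space $M$ is a Krasinkiewicz space if for every compact metrizable $X$ the Krasinkiewicz maps are dense in $C(X,M)$ with the uniform topology. *)

theory Defs
  imports "HOL-Analysis.Analysis"
begin

definition subcontinuum :: "'x topology \<Rightarrow> 'x set \<Rightarrow> bool" where
  "subcontinuum X C \<longleftrightarrow> C \<noteq> {} \<and> compactin X C \<and> connectedin X C"

definition krasinkiewicz_map :: "'x topology \<Rightarrow> 'a topology \<Rightarrow> ('x \<Rightarrow> 'a) \<Rightarrow> bool" where
  "krasinkiewicz_map X M g \<longleftrightarrow>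
     continuous_map X M g \<and>
     (\<forall>C. subcontinuum X C \<longrightarrow>
        (\<exists>y\<in>topspace M. C \<subseteq> {x \<in> topspace X. g x = y}) \<or>
        (\<exists>y\<in>topspace M. \<exists>K \<in> connected_components_of
              (subtopology X {x \<in> topspace X. g x = y}). K \<subseteq> C))"

text \<open>Compact metrizable spaces have cardinality at most
  the continuum, so up to homeomorphism they are exactly the compact metrizable
  topologies on subsets of the real line (carrier type real).\<close>
definition krasinkiewicz_space :: "'a topology \<Rightarrow> bool" where
  "krasinkiewicz_space M \<longleftrightarrow>
     metrizable_space M \<and>
     (\<forall>m. mtopology_of m = M \<longrightarrow>
       (\<forall>X :: real topology. compact_space X \<and> metrizable_space X \<longrightarrow>
         (\<forall>f. continuous_map X M f \<longrightarrow>
           (\<forall>\<epsilon>>0. \<exists>g. krasinkiewicz_map X M g \<and>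
                 (\<forall>x\<in>topspace X. mdist m (f x) (g x) < \<epsilon>)))))"

end

theory Submission
  imports Defs
begin

lemma openin_mtopology_of_iff:
  "openin (mtopology_of m) U \<longleftrightarrow>
     U \<subseteq> mspace m \<and> (\<forall>x\<in>U. \<exists>r>0. \<forall>y\<in>mspace m. mdist m x y < r \<longrightarrow> y \<in> U)"
proof -
  interpret Metric_space "mspace m" "mdist m" by simp
  show ?thesis
    unfolding mtopology_of_def openin_mtopology subset_iff in_mball
    by blast
qed

lemma cm_in: "continuous_map X Y f \<Longrightarrow> x \<in> topspace X \<Longrightarrow> f x \<in> topspace Y"
  using continuous_map_image_subset_topspace by blast

lemma kras_product_map:
  assumes cont: "continuous_map X (product_topology M I) g"
    and comp: "\<forall>i\<in>I. krasinkiewicz_map X (M i) (\<lambda>x. g x i)"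
  shows "krasinkiewicz_map X (product_topology M I) g"
  unfolding krasinkiewicz_map_def
proof (intro conjI allI impI)
  show "continuous_map X (product_topology M I) g" by fact
  fix C assume C: "subcontinuum X C"
  then have Cne: "C \<noteq> {}" and Csub: "C \<subseteq> topspace X"
    by (auto simp: subcontinuum_def compactin_def)
  show "(\<exists>y\<in>topspace (product_topology M I). C \<subseteq> {x \<in> topspace X. g x = y}) \<or>
        (\<exists>y\<in>topspace (product_topology M I). \<exists>K \<in> connected_components_of
              (subtopology X {x \<in> topspace X. g x = y}). K \<subseteq> C)"
  proof (cases "\<forall>i\<in>I. \<exists>y\<in>topspace (M i). C \<subseteq> {x \<in> topspace X. g x i = y}")
    case True
    note allI' = True
    obtain c where c: "c \<in> C" using Cne by blast
    have gc: "g c \<in> topspace (product_topology M I)"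
      using cont c Csub by (blast intro: cm_in)
    have "C \<subseteq> {x \<in> topspace X. g x = g c}"
    proof
      fix x assume x: "x \<in> C"
      have gx: "g x \<in> topspace (product_topology M I)"
        using cont x Csub by (blast intro: cm_in)
      have "g x i = g c i" for i
      proof (cases "i \<in> I")
        case True
        with allI' obtain y where "C \<subseteq> {x \<in> topspace X. g x i = y}" by blast
        then show ?thesis using x c by auto
      next
        case False
        have a: "g x \<in> PiE I (\<lambda>i. topspace (M i))" using gx by (simp only: topspace_product_topology)
        have b: "g c \<in> PiE I (\<lambda>i. topspace (M i))" using gc by (simp only: topspace_product_topology)
        show ?thesis using PiE_arb[OF a False] PiE_arb[OF b False] by (simp only:)
      qed
      then show "x \<in> {x \<in> topspace X. g x = g c}" using x Csub by auto
    qed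
    then show ?thesis using gc by blast
  next
    case False
    then obtain i where i: "i \<in> I" and nf: "\<not> (\<exists>y\<in>topspace (M i). C \<subseteq> {x \<in> topspace X. g x i = y})"
      by blast
    from comp i C nf obtain yi K where yi: "yi \<in> topspace (M i)"
      and K: "K \<in> connected_components_of (subtopology X {x \<in> topspace X. g x i = yi})"
      and KC: "K \<subseteq> C"
      unfolding krasinkiewicz_map_def by blast
    define Fi where "Fi = {x \<in> topspace X. g x i = yi}"
    from K obtain x0 where x0: "x0 \<in> Fi" and Keq: "K = connected_component_of_set (subtopology X Fi) x0"
      unfolding connected_components_of_def Fi_def by auto
    define Fy where "Fy = {x \<in> topspace X. g x = g x0}"
    have x0X: "x0 \<in> topspace X" using x0 Fi_def by auto
    have gx0: "g x0 \<in> topspace (product_topology M I)"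
      using cont x0X by (blast intro: cm_in)
    define L where "L = connected_component_of_set (subtopology X Fy) x0"
    have LFy: "L \<in> connected_components_of (subtopology X Fy)"
      unfolding L_def connected_components_of_def Fy_def using x0X by auto
    have FyFi: "Fy \<subseteq> Fi" using x0 unfolding Fy_def Fi_def by auto
    have Lsub: "L \<subseteq> Fy"
      using connected_component_of_subset_topspace[of "subtopology X Fy" x0]
      unfolding L_def by auto
    have Lconn: "connectedin (subtopology X Fy) L"
      unfolding L_def by (simp add: connectedin_connected_component_of)
    then have "connectedin X L" by (simp add: connectedin_subtopology)
    then have "connectedin (subtopology X Fi) L"
      using Lsub FyFi by (simp add: connectedin_subtopology)
    moreover have "x0 \<in> L" unfolding L_def using x0X
      by (simp add: connected_component_of_refl Fy_def)
    ultimately have "L \<subseteq> K" unfolding Keq by (rule connected_component_of_maximal)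
    then show ?thesis using LFy KC gx0 unfolding Fy_def by blast
  qed
qed


lemma mdist_self: "x \<in> mspace m \<Longrightarrow> mdist m x x = 0"
  by (metis mdist_zero)

lemma openin_mball_of: "openin (mtopology_of m) (mball_of m x r)"
proof -
  interpret Metric_space "mspace m" "mdist m" by simp
  show ?thesis unfolding mtopology_of_def mball_of_def by simp
qed

lemma local_radius:
  assumes fin: "finite I"
    and mt: "mtopology_of m = product_topology M I"
    and mi: "\<And>i. i\<in>I \<Longrightarrow> mtopology_of (mi i) = M i"
    and p: "p \<in> mspace m" and e: "e > 0"
  shows "\<exists>r>0. \<forall>q\<in>mspace m. (\<forall>i\<in>I. mdist (mi i) (p i) (q i) < r) \<longrightarrow> mdist m p q < e"
proof -
  define S where "S = {q \<in> mspace m. mdist m p q < e}"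
  have "openin (mtopology_of m) S"
    unfolding openin_mtopology_of_iff
  proof (intro conjI ballI)
    show "S \<subseteq> mspace m" unfolding S_def by blast
    fix x assume x: "x \<in> S"
    show "\<exists>r>0. \<forall>y\<in>mspace m. mdist m x y < r \<longrightarrow> y \<in> S"
    proof (intro exI[of _ "e - mdist m p x"] conjI ballI impI)
      show "0 < e - mdist m p x" using x unfolding S_def by simp
      fix y assume y: "y \<in> mspace m" and "mdist m x y < e - mdist m p x"
      moreover have "mdist m p y \<le> mdist m p x + mdist m x y"
        using mdist_triangle[of p m x y] p x y unfolding S_def by blast
      ultimately show "y \<in> S" unfolding S_def using y by simp
    qed
  qed
  then have op: "openin (product_topology M I) S" using mt by simp
  have "mdist m p p = 0" using p by (rule mdist_self)
  then have pS: "p \<in> S" using p e unfolding S_def by (simp del: mdist_zero)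
  obtain U where U: "\<forall>i\<in>I. openin (M i) (U i)" "p \<in> PiE I U" "PiE I U \<subseteq> S"
    using op pS unfolding openin_product_topology_alt by blast
  have "\<forall>i\<in>I. \<exists>r>0. \<forall>y\<in>mspace (mi i). mdist (mi i) (p i) y < r \<longrightarrow> y \<in> U i"
  proof
    fix i assume i: "i \<in> I"
    have "openin (mtopology_of (mi i)) (U i)" using U(1) i mi by simp
    moreover have "p i \<in> U i" using U(2) i by (simp add: PiE_mem)
    ultimately show "\<exists>r>0. \<forall>y\<in>mspace (mi i). mdist (mi i) (p i) y < r \<longrightarrow> y \<in> U i"
      unfolding openin_mtopology_of_iff by blast
  qed
  then obtain R where R: "\<forall>i\<in>I. R i > 0 \<and> (\<forall>y\<in>mspace (mi i). mdist (mi i) (p i) y < R i \<longrightarrow> y \<in> U i)"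
    by metis
  define r where "r = Min (insert 1 (R ` I))"
  have r0: "r > 0" unfolding r_def using fin R by (simp add: Min_gr_iff)
  have rle: "r \<le> R i" if "i \<in> I" for i unfolding r_def using fin that by simp
  show ?thesis
  proof (intro exI[of _ r] conjI ballI impI r0)
    fix q assume q: "q \<in> mspace m" and d: "\<forall>i\<in>I. mdist (mi i) (p i) (q i) < r"
    have qP: "q \<in> PiE I (\<lambda>i. topspace (M i))"
      using q mt topspace_mtopology_of[of m] by (metis topspace_product_topology)
    have "q \<in> PiE I U"
      unfolding PiE_iff
    proof (intro conjI ballI)
      show "q \<in> extensional I" using qP by (simp add: PiE_iff)
      fix i assume i: "i \<in> I"
      have "q i \<in> mspace (mi i)" using qP i mi[OF i] topspace_mtopology_of[of "mi i"]
        by (metis PiE_mem)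
      moreover have "mdist (mi i) (p i) (q i) < R i" using d i rle[OF i] by force
      ultimately show "q i \<in> U i" using R i by blast
    qed
    then show "mdist m p q < e" using U(3) unfolding S_def by blast
  qed
qed


lemma uniform_radius:
  assumes fin: "finite I"
    and mt: "mtopology_of m = product_topology M I"
    and mi: "\<And>i. i\<in>I \<Longrightarrow> mtopology_of (mi i) = M i"
    and comp: "compact_space X"
    and f: "continuous_map X (product_topology M I) f"
    and e: "e > 0"
  shows "\<exists>r>0. \<forall>x\<in>topspace X. \<forall>q\<in>mspace m.
           (\<forall>i\<in>I. mdist (mi i) (f x i) (q i) < r) \<longrightarrow> mdist m (f x) q < e"
proof -
  have fx: "f x \<in> mspace m" if "x \<in> topspace X" for x
    using cm_in[OF f that] mt topspace_mtopology_of[of m] by metis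
  have fxi: "f x i \<in> mspace (mi i)" if "x \<in> topspace X" "i \<in> I" for x i
  proof -
    have "f x \<in> PiE I (\<lambda>i. topspace (M i))"
      using cm_in[OF f that(1)] by (simp only: topspace_product_topology)
    then have "f x i \<in> topspace (M i)" using that(2) by (rule PiE_mem)
    then show ?thesis using mi[OF that(2)] topspace_mtopology_of[of "mi i"] by metis
  qed
  have qi: "q i \<in> mspace (mi i)" if "q \<in> mspace m" "i \<in> I" for q i
  proof -
    have "q \<in> PiE I (\<lambda>i. topspace (M i))"
      using that(1) mt topspace_mtopology_of[of m] by (metis topspace_product_topology)
    then have "q i \<in> topspace (M i)" using that(2) by (rule PiE_mem)
    then show ?thesis using mi[OF that(2)] topspace_mtopology_of[of "mi i"] by metis
  qed
  have e2: "e/2 > 0" using e by simp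
  have "\<forall>x\<in>topspace X. \<exists>r>0. \<forall>q\<in>mspace m. (\<forall>i\<in>I. mdist (mi i) (f x i) (q i) < r) \<longrightarrow> mdist m (f x) q < e/2"
    using local_radius[OF fin mt mi fx e2] by blast
  then obtain R where R: "\<forall>x\<in>topspace X. R x > 0 \<and> (\<forall>q\<in>mspace m. (\<forall>i\<in>I. mdist (mi i) (f x i) (q i) < R x) \<longrightarrow> mdist m (f x) q < e/2)"
    by metis
  define W where "W x = {x' \<in> topspace X. \<forall>i\<in>I. mdist (mi i) (f x i) (f x' i) < R x / 2}" for x
  have Wopen: "openin X (W x)" if x: "x \<in> topspace X" for x
  proof -
    have "W x = (\<Inter>i\<in>I. {x' \<in> topspace X. f x' i \<in> mball_of (mi i) (f x i) (R x / 2)}) \<inter> topspace X"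
      unfolding W_def using fxi x by auto
    moreover have "openin X ((\<Inter>i\<in>I. {x' \<in> topspace X. f x' i \<in> mball_of (mi i) (f x i) (R x / 2)}) \<inter> topspace X)"
    proof (rule openin_INT[OF fin])
      fix i assume i: "i \<in> I"
      have c: "continuous_map X (M i) (\<lambda>x. f x i)"
        using f i by (simp add: continuous_map_componentwise)
      have "openin (M i) (mball_of (mi i) (f x i) (R x / 2))"
        using openin_mball_of[of "mi i"] mi[OF i] by simp
      then show "openin X {x' \<in> topspace X. f x' i \<in> mball_of (mi i) (f x i) (R x / 2)}"
        by (rule openin_continuous_map_preimage[OF c])
    qed
    ultimately show ?thesis by simp
  qed
  have xW: "x \<in> W x" if x: "x \<in> topspace X" for x
  proof -
    have "\<forall>i\<in>I. mdist (mi i) (f x i) (f x i) < R x / 2"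
    proof
      fix i assume "i \<in> I"
      then have "mdist (mi i) (f x i) (f x i) = 0" using fxi x by (simp add: mdist_self)
      then show "mdist (mi i) (f x i) (f x i) < R x / 2" using R x by (simp del: mdist_zero)
    qed
    then show ?thesis unfolding W_def using x by blast
  qed
  have "\<exists>\<F>. finite \<F> \<and> \<F> \<subseteq> W ` topspace X \<and> topspace X \<subseteq> \<Union>\<F>"
    using comp unfolding compact_space_alt
    apply (elim allE[of _ "W ` topspace X"])
    using Wopen xW by blast
  then obtain \<F> where F: "finite \<F>" "\<F> \<subseteq> W ` topspace X" "topspace X \<subseteq> \<Union>\<F>" by blast
  then obtain T where T: "T \<subseteq> topspace X" "finite T" "\<F> = W ` T"
    by (meson finite_subset_image)
  define r where "r = Min (insert 1 ((\<lambda>t. R t / 2) ` T))"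
  have r0: "r > 0" unfolding r_def using T R by (auto simp: Min_gr_iff)
  have rle: "r \<le> R t / 2" if "t \<in> T" for t unfolding r_def using T(2) that by (intro Min_le) auto
  show ?thesis
  proof (intro exI[of _ r] conjI ballI impI r0)
    fix x q assume x: "x \<in> topspace X" and q: "q \<in> mspace m"
      and d: "\<forall>i\<in>I. mdist (mi i) (f x i) (q i) < r"
    obtain t where t: "t \<in> T" "x \<in> W t" using F(3) T(3) x by blast
    have tX: "t \<in> topspace X" using t T by blast
    have Rt: "\<forall>q\<in>mspace m. (\<forall>i\<in>I. mdist (mi i) (f t i) (q i) < R t) \<longrightarrow> mdist m (f t) q < e/2"
      using R tX by blast
    have dtx: "mdist (mi i) (f t i) (f x i) < R t / 2" if "i \<in> I" for i
      using t(2) that unfolding W_def by blast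
    have "\<forall>i\<in>I. mdist (mi i) (f t i) (q i) < R t"
    proof
      fix i assume i: "i \<in> I"
      have "mdist (mi i) (f t i) (q i) \<le> mdist (mi i) (f t i) (f x i) + mdist (mi i) (f x i) (q i)"
        by (rule mdist_triangle) (use fxi[OF tX i] fxi[OF x i] qi[OF q i] in auto)
      then show "mdist (mi i) (f t i) (q i) < R t" using dtx[OF i] d i rle[OF t(1)] by force
    qed
    then have "mdist m (f t) q < e/2" using Rt q by blast
    moreover have "\<forall>i\<in>I. mdist (mi i) (f t i) (f x i) < R t"
    proof
      fix i assume i: "i \<in> I"
      show "mdist (mi i) (f t i) (f x i) < R t" using dtx[OF i] R tX by force
    qed
    then have "mdist m (f t) (f x) < e/2" using Rt fx[OF x] by blast
    moreover have "mdist m (f x) q \<le> mdist m (f x) (f t) + mdist m (f t) q"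
      by (rule mdist_triangle) (use fx[OF x] fx[OF tX] q in auto)
    ultimately show "mdist m (f x) q < e" by (simp add: mdist_commute)
  qed
qed


theorem proposition3p5:
  fixes M :: "'i \<Rightarrow> 'a topology" and I :: "'i set"
  assumes "finite I"
    and "\<forall>i\<in>I. krasinkiewicz_space (M i)"
  shows "krasinkiewicz_space (product_topology M I)"
proof -
  have fin: "finite I" by fact
  have met: "\<forall>i\<in>I. metrizable_space (M i)" using assms(2) unfolding krasinkiewicz_space_def by blast
  have cnt: "countable {i \<in> I. \<not> (\<exists>a. topspace (M i) \<subseteq> {a})}"
    by (rule countable_finite) (use fin in auto)
  have metP: "metrizable_space (product_topology M I)"
    unfolding metrizable_space_product_topology using met cnt by blast
  have "\<forall>i\<in>I. \<exists>mm. mtopology_of mm = M i"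
    using met by (metis Metric_space.mtopology_of metrizable_space_def)
  then obtain mi where mi: "\<And>i. i\<in>I \<Longrightarrow> mtopology_of (mi i) = M i" by metis
  show ?thesis
    unfolding krasinkiewicz_space_def
  proof (intro conjI allI impI metP)
    fix m :: "('i \<Rightarrow> 'a) metric" and X :: "real topology" and f e
    assume mt: "mtopology_of m = product_topology M I"
      and X: "compact_space X \<and> metrizable_space X"
      and f: "continuous_map X (product_topology M I) f"
      and e: "0 < (e::real)"
    obtain r where r: "r > 0" and rP: "\<forall>x\<in>topspace X. \<forall>q\<in>mspace m.
           (\<forall>i\<in>I. mdist (mi i) (f x i) (q i) < r) \<longrightarrow> mdist m (f x) q < e"
      using uniform_radius[OF fin mt mi _ f e] X by blast
    have "\<forall>i\<in>I. \<exists>G. krasinkiewicz_map X (M i) G \<and> (\<forall>x\<in>topspace X. mdist (mi i) (f x i) (G x) < r)"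
    proof
      fix i assume i: "i \<in> I"
      have c: "continuous_map X (M i) (\<lambda>x. f x i)"
        using f i by (simp add: continuous_map_componentwise)
      have "krasinkiewicz_space (M i)" using assms(2) i by blast
      then show "\<exists>G. krasinkiewicz_map X (M i) G \<and> (\<forall>x\<in>topspace X. mdist (mi i) (f x i) (G x) < r)"
        unfolding krasinkiewicz_space_def using mi[OF i] X c r by blast
    qed
    then obtain G where G: "\<forall>i\<in>I. krasinkiewicz_map X (M i) (G i) \<and> (\<forall>x\<in>topspace X. mdist (mi i) (f x i) (G i x) < r)"
      by metis
    define g where "g x = restrict (\<lambda>i. G i x) I" for x
    have gi: "(\<lambda>x. g x i) = G i" if "i \<in> I" for i using that by (simp add: g_def)
    have gc: "continuous_map X (product_topology M I) g"
      unfolding continuous_map_componentwise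
    proof (intro conjI ballI)
      show "g ` topspace X \<subseteq> extensional I" by (auto simp: g_def)
      fix k assume k: "k \<in> I"
      show "continuous_map X (M k) (\<lambda>x. g x k)"
        using G k gi[OF k] unfolding krasinkiewicz_map_def by simp
    qed
    have "krasinkiewicz_map X (product_topology M I) g"
      by (rule kras_product_map[OF gc]) (use G gi in simp)
    moreover have "\<forall>x\<in>topspace X. mdist m (f x) (g x) < e"
    proof
      fix x assume x: "x \<in> topspace X"
      have gx: "g x \<in> mspace m" using cm_in[OF gc x] mt topspace_mtopology_of[of m] by metis
      have "\<forall>i\<in>I. mdist (mi i) (f x i) (g x i) < r" using G x by (simp add: g_def)
      then show "mdist m (f x) (g x) < e" using rP x gx by blast
    qed
    ultimately show "\<exists>g. krasinkiewicz_map X (product_topology M I) g \<and>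
                 (\<forall>x\<in>topspace X. mdist m (f x) (g x) < e)" by blast
  qed
qed

end
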